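(* Let $P\subset\mathbb{R}^d$ be a full-dimensional lattice polytope with facet presentation $P=\{x: n_F(x)\ge -h_F\ \forall F\in\mathcal{F}(P)\}$ and codegree $a$, and suppose $P=\lfloor aP\rfloor+\{P\}$. Then \[\lfloor aP\rfloor=\{x\in\mathbb{R}^d: n_F(x)\ge 1-ah_F \text{ for all } F\in\mathcal{F}(P)\}\] and \[\{P\}=\{x\in\mathbb{R}^d: n_F(x)\ge (a-1)h_F-1 \text{ for all } F\in\mathcal{F}(P)\}.\] In particular, the right-hand sides are lattice polytopes. Furthermore, if $a=1$, then $\{P\}$ is a reflexive polytope.
   Context: $\mathcal{F}(P)$ is the set of facets of $P$; $n_F\in(\mathbb{Z}^d)^*$ is the primitive inner normal of $F$ and $h_F\in\mathbb{Z}$. The codegree is $a=\min\{k\in\mathbb{Z}_{\ge1}: \mathrm{int}(kP)\cap\mathbb{Z}^d\ne\varnothing\}$. For a lattice polytope $Q$, $\lfloor Q\rfloor=\mathrm{conv}(\mathrm{int}(Q)\cap\mathbb{Z}^d)$. The remainder polytope is $\{P\}=\mathrm{conv}\{x\in\mathbb{Z}^d: n_F(x)\ge (a-1)h_F-1\ \forall F\in\mathcal{F}(P)\}$. $+$ is Minkowski sum. The dual of a polytope $Q$ is $Q^*=\{n\in(\mathbb{R}^d)^*: n(x)\ge -1\ \forall x\in Q\}$; $Q$ is reflexive if both $Q$ and $Q^*$ are lattice polytopes (with respect to $\mathbb{Z}^d$ and $(\mathbb{Z}^d)^*$). *)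

theory Defs
  imports "HOL-Analysis.Analysis"
begin

definition lattice_point :: "real^'n \<Rightarrow> bool" where
  "lattice_point x \<longleftrightarrow> (\<forall>i. x $ i \<in> \<int>)"

definition lattice_polytope :: "(real^'n) set \<Rightarrow> bool" where
  "lattice_polytope P \<longleftrightarrow>
     (\<exists>S. finite S \<and> S \<noteq> {} \<and> (\<forall>x\<in>S. lattice_point x) \<and> P = convex hull S)"

text \<open>Primitive integral (dual) vector; the dual lattice is identified with Z^d
  via the standard inner product.\<close>
definition primitive_vec :: "real^'n \<Rightarrow> bool" where
  "primitive_vec v \<longleftrightarrow> lattice_point v \<and> v \<noteq> 0 \<and>
     (\<forall>k::int. k > 0 \<and> (\<forall>i. \<exists>m::int. v $ i = of_int k * of_int m) \<longrightarrow> k = 1)"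

definition facet_normal :: "(real^'n) set \<Rightarrow> (real^'n) set \<Rightarrow> real^'n \<Rightarrow> int \<Rightarrow> bool" where
  "facet_normal P F n h \<longleftrightarrow> F facet_of P \<and> primitive_vec n \<and>
     (\<forall>x\<in>P. n \<bullet> x \<ge> - of_int h) \<and> F = {x\<in>P. n \<bullet> x = - of_int h}"

definition dilate :: "nat \<Rightarrow> (real^'n) set \<Rightarrow> (real^'n) set" where
  "dilate k P = (\<lambda>x. real k *\<^sub>R x) ` P"

definition codegree :: "(real^'n) set \<Rightarrow> nat" where
  "codegree P = (LEAST k::nat. k \<ge> 1 \<and> (\<exists>x. lattice_point x \<and> x \<in> interior (dilate k P)))"

definition lattice_floor :: "(real^'n) set \<Rightarrow> (real^'n) set" where
  "lattice_floor Q = convex hull {x. x \<in> interior Q \<and> lattice_point x}"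

definition remainder_polytope :: "(real^'n) set \<Rightarrow> (real^'n) set" where
  "remainder_polytope P = convex hull {x. lattice_point x \<and>
     (\<forall>F n h. facet_normal P F n h \<longrightarrow>
        n \<bullet> x \<ge> (real (codegree P) - 1) * of_int h - 1)}"

definition minkowski_sum :: "(real^'n) set \<Rightarrow> (real^'n) set \<Rightarrow> (real^'n) set" where
  "minkowski_sum A B = {x + y | x y. x \<in> A \<and> y \<in> B}"

definition polar_dual :: "(real^'n) set \<Rightarrow> (real^'n) set" where
  "polar_dual Q = {v. \<forall>x\<in>Q. v \<bullet> x \<ge> -1}"

definition reflexive_polytope :: "(real^'n) set \<Rightarrow> bool" where
  "reflexive_polytope Q \<longleftrightarrow> lattice_polytope Q \<and> lattice_polytope (polar_dual Q)"

end

theory Submission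
  imports Defs
begin



lemma lattice_inner_Ints:
  assumes "lattice_point x" "lattice_point y"
  shows "x \<bullet> y \<in> \<int>"
  using assms unfolding lattice_point_def inner_vec_def
  by (auto intro!: Ints_sum Ints_mult)

lemma det_Ints:
  fixes A :: "real^'n^'n"
  assumes "\<And>i j. A$i$j \<in> \<int>"
  shows "det A \<in> \<int>"
  unfolding det_def using assms
  by (auto intro!: Ints_sum Ints_mult Ints_prod)

lemma card_Basis_cart: "card (Basis :: (real^'n) set) = CARD('n)"
  by simp

lemma det_row_linear:
  fixes c :: "'n \<Rightarrow> real^'n"
  shows "det ((\<chi> k. if k = i0 then w else c k) :: real^'n^'n) =
     (\<Sum>j\<in>UNIV. w$j * det ((\<chi> k. if k = i0 then axis j 1 else c k) :: real^'n^'n))"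
proof -
  have "det ((\<chi> k. if k = i0 then w else c k) :: real^'n^'n) =
     det ((\<chi> k. if k = i0 then (\<Sum>j\<in>UNIV. w$j *s axis j 1) else c k) :: real^'n^'n)"
    by (subst basis_expansion) (rule refl)
  also have "\<dots> = (\<Sum>j\<in>UNIV. det ((\<chi> k. if k = i0 then w$j *s axis j 1 else c k) :: real^'n^'n))"
    by (rule det_linear_row_sum[where a="\<lambda>i j. w$j *s axis j 1", simplified])
  also have "\<dots> = (\<Sum>j\<in>UNIV. w$j * det ((\<chi> k. if k = i0 then axis j 1 else c k) :: real^'n^'n))"
    by (simp add: det_row_mul)
  finally show ?thesis .
qed

lemma int_normal:
  fixes D :: "(real^'n) set"
  assumes lat: "\<forall>v\<in>D. lattice_point v" and dimD: "dim D = CARD('n) - 1"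
  obtains m where "lattice_point m" "m \<noteq> 0" "\<forall>v\<in>D. m \<bullet> v = 0"
    "\<forall>a. (\<forall>v\<in>D. a \<bullet> v = 0) \<longrightarrow> (\<exists>c. a = c *\<^sub>R m)"
proof -
  obtain B where B: "B \<subseteq> D" "independent B" "D \<subseteq> span B" "card B = dim D"
    by (rule basis_exists)
  have finB: "finite B" using B(2) by (simp add: independent_imp_finite)
  obtain j0 where j0: "axis j0 (1::real) \<notin> span B"
  proof (rule ccontr)
    assume "\<not> thesis"
    then have "\<forall>j. axis j (1::real) \<in> span B" using that by blast
    then have "(Basis :: (real^'n) set) \<subseteq> span B" by (auto simp: Basis_vec_def)
    then have "span B = UNIV"
      by (metis span_Basis span_minimal subspace_span top.extremum_uniqueI)
    then have "dim B = CARD('n)"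
      by (metis dim_UNIV dim_span card_Basis_cart)
    moreover have "dim B = card B" using B(2) by (rule dim_eq_card_independent)
    moreover have "CARD('n) > 0" by simp
    ultimately show False using B(4) dimD by linarith
  qed
  obtain i0 :: 'n where True by simp
  have "card (UNIV - {i0}) = card B"
    using B(4) dimD by (simp add: card_Diff_subset)
  then obtain g where g: "bij_betw g (UNIV - {i0}) B"
    using finB finite_same_card_bij by (metis finite_Diff finite)
  define M where "M w = ((\<chi> k. if k = i0 then w else g k) :: real^'n^'n)" for w
  define f where "f w = det (M w)" for w
  define m where "m = (\<chi> j. f (axis j 1))"
  have fm: "m \<bullet> w = f w" for w
    unfolding f_def M_def det_row_linear[of i0 w] m_def inner_vec_def
    by (simp add: mult.commute)
  have latB: "lattice_point b" if "b \<in> B" for b using that B(1) lat by blast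
  have "lattice_point m"
    unfolding lattice_point_def m_def f_def
  proof
    fix j show "(\<chi> j. det (M (axis j 1))) $ j \<in> \<int>"
      apply simp
      apply (rule det_Ints)
      using g latB unfolding M_def lattice_point_def bij_betw_def
      by (auto simp: axis_def)
  qed
  have mB: "m \<bullet> b = 0" if bB: "b \<in> B" for b
  proof -
    obtain k where k: "k \<noteq> i0" "g k = b" using g bB unfolding bij_betw_def by auto
    have "f b = 0" unfolding f_def M_def
      by (rule det_identical_rows[of i0 k]) (use k in \<open>auto simp: row_def vec_eq_iff\<close>)
    then show ?thesis by (simp add: fm)
  qed
  have mspan: "m \<bullet> v = 0" if "v \<in> span B" for v
  proof -
    have "subspace {v. m \<bullet> v = 0}" by (auto simp: subspace_def inner_add_right)
    then have "span B \<subseteq> {v. m \<bullet> v = 0}" using mB by (intro span_minimal) auto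
    then show ?thesis using that by blast
  qed
  have rowsM: "rows (M (axis j0 1)) = insert (axis j0 1) B"
    using g unfolding rows_def M_def row_def bij_betw_def by (auto simp: image_def)
  have indep: "independent (insert (axis j0 (1::real)) B)"
    using B(2) j0 by (simp add: independent_insert)
  have "card (insert (axis j0 (1::real)) B) = CARD('n)"
  proof -
    have "axis j0 1 \<notin> B" using j0 span_base by blast
    then have "card (insert (axis j0 (1::real)) B) = Suc (card B)" using finB by simp
    moreover have "CARD('n) > 0" by simp
    ultimately show ?thesis using B(4) dimD by linarith
  qed
  then have "rank (M (axis j0 1)) = CARD('n)"
    unfolding row_rank_def rowsM using indep dim_eq_card_independent by metis
  then have "f (axis j0 1) \<noteq> 0" unfolding f_def by (simp add: det_eq_0_rank)
  then have m0: "m \<noteq> 0" using fm[of "axis j0 1"] by auto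
  have mD: "\<forall>v\<in>D. m \<bullet> v = 0" using mspan B(3) by blast
  have "m \<notin> span B" using mspan[of m] m0 by auto
  then have "independent (insert m B)" using B(2) by (simp add: independent_insert)
  moreover have "card (insert m B) = CARD('n)"
  proof -
    have "m \<notin> B" using \<open>m \<notin> span B\<close> span_base by blast
    then have "card (insert m B) = Suc (card B)" using finB by simp
    moreover have "CARD('n) > 0" by simp
    ultimately show ?thesis using B(4) dimD by linarith
  qed
  ultimately have "span (insert m B) = UNIV"
    by (metis dim_eq_card_independent dim_eq_full card_Basis_cart)
  have allmult: "\<exists>c. a = c *\<^sub>R m" if a: "\<forall>v\<in>D. a \<bullet> v = 0" for a
  proof -
    have aspan: "a \<bullet> v = 0" if "v \<in> span B" for v
    proof -
      have "subspace {v. a \<bullet> v = 0}" by (auto simp: subspace_def inner_add_right)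
      then have "span B \<subseteq> {v. a \<bullet> v = 0}" using a B(1) by (intro span_minimal) auto
      then show ?thesis using that by blast
    qed
    have "a \<in> span (insert m B)" using \<open>span (insert m B) = UNIV\<close> by simp
    then obtain c where c: "a - c *\<^sub>R m \<in> span B" by (auto simp: span_insert)
    have "(a - c *\<^sub>R m) \<bullet> (a - c *\<^sub>R m) = a \<bullet> (a - c *\<^sub>R m) - c * (m \<bullet> (a - c *\<^sub>R m))"
      by (simp add: inner_diff_left)
    also have "\<dots> = 0" using aspan[OF c] mspan[OF c] by simp
    finally have "a - c *\<^sub>R m = 0" by simp
    then show ?thesis by auto
  qed
  show ?thesis using that \<open>lattice_point m\<close> m0 mD allmult by blast
qed



lemma lattice_int_coords:
  fixes x :: "real^'n"
  assumes "lattice_point x"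
  obtains A :: "'n \<Rightarrow> int" where "\<And>i. x$i = of_int (A i)"
proof -
  have "\<forall>i. \<exists>k::int. x$i = of_int k" using assms unfolding lattice_point_def Ints_def by auto
  from choice[OF this] obtain A :: "'n \<Rightarrow> int" where "\<forall>i. x$i = of_int (A i)" by blast
  then show ?thesis using that by blast
qed

lemma make_primitive:
  fixes m :: "real^'n"
  assumes "lattice_point m" "m \<noteq> 0"
  obtains g :: real where "g > 0" "primitive_vec ((1/g) *\<^sub>R m)"
proof -
  obtain A :: "'n \<Rightarrow> int" where A: "\<And>i. m$i = of_int (A i)"
    using assms(1) lattice_int_coords by blast
  define G where "G = Gcd (range A)"
  obtain i1 where "m$i1 \<noteq> 0" using assms(2) by (auto simp: vec_eq_iff)
  then have "A i1 \<noteq> 0" using A by simp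
  then have "G \<noteq> 0" unfolding G_def by auto
  moreover have "G \<ge> 0" unfolding G_def by simp
  ultimately have Gpos: "G > 0" by simp
  have Gdvd: "G dvd A i" for i unfolding G_def by (rule Gcd_dvd) simp
  define n where "n = (1 / real_of_int G) *\<^sub>R m"
  have n_eq: "n$i = of_int (A i div G)" for i
  proof -
    obtain t where "A i = G * t" using Gdvd[of i] by (auto elim: dvdE)
    then show ?thesis using Gpos by (simp add: n_def A)
  qed
  have "primitive_vec n"
    unfolding primitive_vec_def
  proof (intro conjI allI impI)
    show "lattice_point n" unfolding lattice_point_def n_eq by simp
    show "n \<noteq> 0" using assms(2) Gpos by (simp add: n_def)
    fix k :: int assume k: "0 < k \<and> (\<forall>i. \<exists>mm::int. n $ i = of_int k * of_int mm)"
    have Gk: "G * k dvd A i" for i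
    proof -
      obtain mm :: int where "n$i = of_int k * of_int mm" using k by blast
      then have "(of_int (A i div G) :: real) = of_int (k * mm)" unfolding n_eq by simp
      then have "A i div G = k * mm" by (simp only: of_int_eq_iff)
      then have "A i = G * (k * mm)" using Gdvd[of i] by (metis dvd_mult_div_cancel)
      then show ?thesis by simp
    qed
    then have "G * k dvd G" unfolding G_def by (intro Gcd_greatest) auto
    then have "G * k \<le> G * 1" using Gpos by (simp add: zdvd_imp_le)
    then show "k = 1" using Gpos k by simp
  qed
  then show ?thesis using that[of "real_of_int G"] Gpos n_def by simp
qed

lemma primitive_lattice: "primitive_vec n \<Longrightarrow> lattice_point n"
  by (simp add: primitive_vec_def)

lemma prim_unique:
  fixes n n' :: "real^'n"
  assumes p: "primitive_vec n" and p': "primitive_vec n'" and l: "n' = l *\<^sub>R n" "l > 0"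
  shows "l = 1"
proof -
  obtain A :: "'n \<Rightarrow> int" where A: "\<And>i. n$i = of_int (A i)"
    using p primitive_lattice lattice_int_coords by blast
  obtain A' :: "'n \<Rightarrow> int" where A': "\<And>i. n'$i = of_int (A' i)"
    using p' primitive_lattice lattice_int_coords by blast
  have "n \<noteq> 0" using p unfolding primitive_vec_def by blast
  then obtain i1 where i1: "n$i1 \<noteq> 0" by (auto simp: vec_eq_iff)
  have comp: "n'$j = l * n$j" for j using l(1) by simp
  then have "l = n'$i1 / n$i1" using i1 by simp
  then have "l = of_int (A' i1) / of_int (A i1)" using A A' by simp
  then have "l \<in> \<rat>" by simp
  then obtain p q :: int where pq: "q > 0" "coprime p q" "l = of_int p / of_int q"
    by (rule Rats_cases')
  have "p > 0" using pq l(2) by (simp add: zero_less_divide_iff)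
  have eq: "q * A' j = p * A j" for j
  proof -
    have "(of_int (A' j) :: real) = (of_int p / of_int q) * of_int (A j)"
      using comp[of j] pq(3) A A' by simp
    then have "(of_int q * of_int (A' j) :: real) = of_int p * of_int (A j)"
      using pq(1) by (simp add: field_simps)
    then have "(of_int (q * A' j) :: real) = of_int (p * A j)" by simp
    then show ?thesis by (simp only: of_int_eq_iff)
  qed
  have "p = 1"
  proof -
    have pd: "p dvd A' j" for j
    proof -
      have "p dvd q * A' j" using eq[of j] by simp
      then show ?thesis using pq(2) by (simp add: coprime_dvd_mult_right_iff)
    qed
    have "\<forall>i. \<exists>mm::int. n' $ i = of_int p * of_int mm"
    proof
      fix i
      obtain mm where "A' i = p * mm" using pd[of i] by (auto elim: dvdE)
      then show "\<exists>mm::int. n' $ i = of_int p * of_int mm" using A'[of i] by (intro exI[of _ mm]) simp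
    qed
    then show ?thesis using p' \<open>p > 0\<close> unfolding primitive_vec_def by blast
  qed
  have "q = 1"
  proof -
    have qd: "q dvd A j" for j
    proof -
      have "q dvd p * A j" using eq[of j] dvd_triv_left[of q "A' j"] by simp
      then show ?thesis using pq(2) by (simp add: coprime_commute coprime_dvd_mult_right_iff)
    qed
    have "\<forall>i. \<exists>mm::int. n $ i = of_int q * of_int mm"
    proof
      fix i
      obtain mm where "A i = q * mm" using qd[of i] by (auto elim: dvdE)
      then show "\<exists>mm::int. n $ i = of_int q * of_int mm" using A[of i] by (intro exI[of _ mm]) simp
    qed
    then show ?thesis using p pq(1) unfolding primitive_vec_def by blast
  qed
  show ?thesis using pq(3) \<open>p = 1\<close> \<open>q = 1\<close> by simp
qed




lemma lattice_diff: "lattice_point x \<Longrightarrow> lattice_point y \<Longrightarrow> lattice_point (- x + y)"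
  unfolding lattice_point_def by simp

lemma lattice_neg: "lattice_point x \<Longrightarrow> lattice_point (- x)"
  unfolding lattice_point_def by simp

lemma interior_strict:
  fixes P :: "(real^'n) set"
  assumes "x \<in> interior P" "\<forall>y\<in>P. n \<bullet> y \<ge> r" "n \<noteq> 0"
  shows "n \<bullet> x > r"
proof -
  have "interior P \<subseteq> interior {y. n \<bullet> y \<ge> r}" using assms(2) by (intro interior_mono) auto
  then show ?thesis using assms by auto
qed

lemma facet_dirs:
  fixes P :: "(real^'n) set"
  assumes S: "finite S" "\<forall>x\<in>S. lattice_point x" and P: "P = convex hull S"
    and int: "interior P \<noteq> {}" and C: "C facet_of P"
  obtains x0 T where "x0 \<in> T" "T \<subseteq> C" "\<forall>y\<in>T. lattice_point y"
    "dim ((+) (- x0) ` T) = CARD('n) - 1"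
proof -
  have cS: "compact S" using S(1) by (rule finite_imp_compact)
  have fS: "C face_of convex hull S" using C P facet_of_imp_face_of by simp
  obtain S' where S': "S' \<subseteq> S" "C = convex hull S'"
    using face_of_convex_hull_subset[OF cS fS] by blast
  have "C \<noteq> {}" using C unfolding facet_of_def by blast
  then obtain x0 where x0: "x0 \<in> S'" using S' by auto
  have "aff_dim C = aff_dim P - 1" using C unfolding facet_of_def by blast
  moreover have "aff_dim P = int CARD('n)" using aff_dim_nonempty_interior[OF int] by simp
  moreover have "aff_dim C = int (dim ((+) (- x0) ` S'))"
  proof -
    have "x0 \<in> affine hull S'" using x0 by (rule hull_inc)
    then have "aff_dim S' = int (dim ((+) (- x0) ` S'))" by (rule aff_dim_eq_dim)
    then show ?thesis using S'(2) by (simp add: aff_dim_convex_hull)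
  qed
  ultimately have "int (dim ((+) (- x0) ` S')) = int CARD('n) - 1" by simp
  moreover have "CARD('n) \<ge> 1" by (simp add: Suc_leI)
  ultimately have d: "dim ((+) (- x0) ` S') = CARD('n) - 1" by linarith
  have sub: "S' \<subseteq> C" unfolding S'(2) by (rule hull_subset)
  have lat: "\<forall>y\<in>S'. lattice_point y" using S'(1) S(2) by blast
  show ?thesis by (rule that[OF x0 sub lat d])
qed

lemma facet_int_normal:
  fixes P :: "(real^'n) set"
  assumes S: "finite S" "\<forall>x\<in>S. lattice_point x" and P: "P = convex hull S"
    and int: "interior P \<noteq> {}" and C: "C facet_of P"
    and a: "a \<noteq> 0" "P \<subseteq> {x. a \<bullet> x \<le> b}" "C = P \<inter> {x. a \<bullet> x = b}"
  obtains n h c where "c > 0" "n = (- c) *\<^sub>R a" "facet_normal P C n h"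
proof -
  obtain x0 T where T: "x0 \<in> T" "T \<subseteq> C" "\<forall>y\<in>T. lattice_point y"
    "dim ((+) (- x0) ` T) = CARD('n) - 1"
    using facet_dirs[OF S P int C] by blast
  have ax0: "a \<bullet> x0 = b" using T a by auto
  have latD: "\<forall>v\<in>(+) (- x0) ` T. lattice_point v" using T by (auto simp: lattice_point_def)
  obtain m where m: "lattice_point m" "m \<noteq> 0"
    "\<forall>a. (\<forall>v\<in>(+) (- x0) ` T. a \<bullet> v = 0) \<longrightarrow> (\<exists>c. a = c *\<^sub>R m)"
    by (rule int_normal[OF latD T(4)]) blast+
  have "\<forall>v\<in>(+) (- x0) ` T. a \<bullet> v = 0"
    using T a ax0 by (auto simp: inner_add_right inner_diff_right subset_eq)
  then obtain t where t: "a = t *\<^sub>R m" using m(3) by blast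
  have t0: "t \<noteq> 0" using t a by auto
  define m2 where "m2 = (if t < 0 then m else - m)"
  have m2: "lattice_point m2" "m2 \<noteq> 0" using m lattice_neg by (auto simp: m2_def)
  have am2: "- a = \<bar>t\<bar> *\<^sub>R m2" using t t0 by (auto simp: m2_def)
  obtain g where g: "g > 0" "primitive_vec ((1/g) *\<^sub>R m2)" using make_primitive[OF m2] by blast
  define n where "n = (1/g) *\<^sub>R m2"
  define c where "c = 1 / (\<bar>t\<bar> * g)"
  have c0: "c > 0" using g t0 by (simp add: c_def)
  have nc: "n = (- c) *\<^sub>R a"
  proof -
    have "n = (1/g) *\<^sub>R ((1/\<bar>t\<bar>) *\<^sub>R (\<bar>t\<bar> *\<^sub>R m2))" using t0 by (simp add: n_def)
    also have "\<dots> = (1/g) *\<^sub>R ((1/\<bar>t\<bar>) *\<^sub>R (- a))" using am2 by simp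
    also have "\<dots> = (- c) *\<^sub>R a" by (simp add: c_def)
    finally show ?thesis .
  qed
  have "lattice_point x0" using T by blast
  then have "n \<bullet> x0 \<in> \<int>" using g(2) primitive_lattice lattice_inner_Ints unfolding n_def by blast
  then obtain k :: int where k: "n \<bullet> x0 = of_int k" by (rule Ints_cases)
  have nx: "n \<bullet> x = - c * (a \<bullet> x)" for x by (simp add: nc)
  have "facet_normal P C n (- k)"
    unfolding facet_normal_def
  proof (intro conjI)
    show "C facet_of P" by fact
    show "primitive_vec n" using g n_def by simp
    show "\<forall>x\<in>P. - of_int (- k) \<le> n \<bullet> x"
    proof
      fix x assume "x \<in> P"
      then have "a \<bullet> x \<le> b" using a by auto
      then have "- c * b \<le> - c * (a \<bullet> x)" using c0 by simp
      then show "- of_int (- k) \<le> n \<bullet> x" using k nx[of x] nx[of x0] ax0 by simp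
    qed
    have eqv: "(n \<bullet> x = n \<bullet> x0) \<longleftrightarrow> (a \<bullet> x = a \<bullet> x0)" for x using c0 by (simp add: nc)
    show "C = {x \<in> P. n \<bullet> x = - of_int (- k)}"
      using a(3) k ax0 eqv by auto
  qed
  then show ?thesis using that c0 nc by blast
qed

lemma facet_normal_unique:
  fixes P :: "(real^'n) set"
  assumes S: "finite S" "\<forall>x\<in>S. lattice_point x" and P: "P = convex hull S"
    and int: "interior P \<noteq> {}"
    and f1: "facet_normal P C n h" and f2: "facet_normal P C n' h'"
  shows "n = n'"
proof -
  have C: "C facet_of P" using f1 facet_normal_def by blast
  obtain x0 T where T: "x0 \<in> T" "T \<subseteq> C" "\<forall>y\<in>T. lattice_point y"
    "dim ((+) (- x0) ` T) = CARD('n) - 1"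
    using facet_dirs[OF S P int C] by blast
  have latD: "\<forall>v\<in>(+) (- x0) ` T. lattice_point v" using T by (auto simp: lattice_point_def)
  obtain m where m: "lattice_point m" "m \<noteq> 0"
    "\<forall>a. (\<forall>v\<in>(+) (- x0) ` T. a \<bullet> v = 0) \<longrightarrow> (\<exists>c. a = c *\<^sub>R m)"
    by (rule int_normal[OF latD T(4)]) blast+
  have Cn: "C = {x \<in> P. n \<bullet> x = - of_int h}" "\<forall>x\<in>P. n \<bullet> x \<ge> - of_int h" "primitive_vec n"
    using f1 unfolding facet_normal_def by blast+
  have Cn': "C = {x \<in> P. n' \<bullet> x = - of_int h'}" "\<forall>x\<in>P. n' \<bullet> x \<ge> - of_int h'" "primitive_vec n'"
    using f2 unfolding facet_normal_def by blast+
  have "\<forall>v\<in>(+) (- x0) ` T. n \<bullet> v = 0"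
    using T Cn by (auto simp: inner_add_right inner_diff_right subset_eq)
  then obtain c where c: "n = c *\<^sub>R m" using m(3) by blast
  have "\<forall>v\<in>(+) (- x0) ` T. n' \<bullet> v = 0"
    using T Cn' by (auto simp: inner_add_right inner_diff_right subset_eq)
  then obtain c' where c': "n' = c' *\<^sub>R m" using m(3) by blast
  have n0: "n \<noteq> 0" "n' \<noteq> 0" using Cn(3) Cn'(3) primitive_vec_def by auto
  then have "c \<noteq> 0" using c by auto
  define l where "l = c' / c"
  have nl: "n' = l *\<^sub>R n" using c c' \<open>c \<noteq> 0\<close> by (simp add: l_def)
  obtain p where p: "p \<in> interior P" using int by blast
  have "n \<bullet> p > - of_int h" using interior_strict[OF p Cn(2) n0(1)] .
  moreover have "n' \<bullet> p > - of_int h'" using interior_strict[OF p Cn'(2) n0(2)] .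
  moreover have "x0 \<in> C" using T by blast
  then have "n \<bullet> x0 = - of_int h" "n' \<bullet> x0 = - of_int h'" using Cn(1) Cn'(1) by blast+
  ultimately have "n \<bullet> (p - x0) > 0" "n' \<bullet> (p - x0) > 0"
    by (auto simp: inner_diff_right)
  then have "l * (n \<bullet> (p - x0)) > 0" using nl by simp
  then have "l > 0" using \<open>n \<bullet> (p - x0) > 0\<close> by (simp add: zero_less_mult_iff)
  then have "l = 1" using prim_unique[OF Cn(3) Cn'(3) nl] by simp
  then show ?thesis using nl by simp
qed






lemma bounded_lattice_finite:
  fixes A :: "(real^'n) set"
  assumes "bounded A" "\<forall>x\<in>A. lattice_point x"
  shows "finite A"
proof -
  obtain r where r: "\<forall>x\<in>A. norm x \<le> r" using assms(1) bounded_iff by blast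
  define Z where "Z = (of_int ` {-\<lceil>r\<rceil>..\<lceil>r\<rceil>} :: real set)"
  have fZ: "finite Z" unfolding Z_def by simp
  have "vec_nth ` A \<subseteq> Pi\<^sub>E UNIV (\<lambda>_. Z)"
  proof
    fix f assume "f \<in> vec_nth ` A"
    then obtain x where x: "x \<in> A" "f = vec_nth x" by blast
    have "x$i \<in> Z" for i
    proof -
      have "norm x \<le> r" using r x by blast
      then have "\<bar>x$i\<bar> \<le> r" using component_le_norm_cart[of x i] by linarith
      moreover obtain k where "x$i = of_int k" using assms(2) x unfolding lattice_point_def by (metis Ints_cases)
      ultimately have "k \<in> {-\<lceil>r\<rceil>..\<lceil>r\<rceil>}" by (auto; linarith)
      then show ?thesis unfolding Z_def using \<open>x$i = of_int k\<close> by blast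
    qed
    then show "f \<in> Pi\<^sub>E UNIV (\<lambda>_. Z)" using x by (simp add: PiE_UNIV_domain)
  qed
  moreover have "finite (Pi\<^sub>E (UNIV::'n set) (\<lambda>_. Z))" using fZ by (intro finite_PiE) auto
  ultimately have "finite (vec_nth ` A)" by (rule finite_subset)
  moreover have "inj_on vec_nth A" by (simp add: inj_on_def vec_nth_inject)
  ultimately show ?thesis using finite_imageD by blast
qed

lemma msum_commute: "minkowski_sum A B = minkowski_sum B A"
  unfolding minkowski_sum_def by (auto; metis add.commute)

lemma cancel_sum:
  fixes A A' B B' :: "(real^'n) set"
  assumes "convex A" "closed A" "compact B'" "B' \<noteq> {}" "B \<subseteq> B'"
    and "minkowski_sum A' B' \<subseteq> minkowski_sum A B"
  shows "A' \<subseteq> A"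
proof
  fix x assume xA': "x \<in> A'"
  show "x \<in> A"
  proof (rule ccontr)
    assume "x \<notin> A"
    then obtain u \<beta> where u: "u \<bullet> x < \<beta>" "\<forall>y\<in>A. \<beta> < u \<bullet> y"
      using separating_hyperplane_closed_point[OF assms(1,2)] by blast
    have "continuous_on B' (\<lambda>y. u \<bullet> y)" by (intro continuous_intros)
    then obtain b' where b': "b' \<in> B'" "\<forall>y\<in>B'. u \<bullet> b' \<le> u \<bullet> y"
      using continuous_attains_inf[OF assms(3,4)] by blast
    have "x + b' \<in> minkowski_sum A' B'" using xA' b' unfolding minkowski_sum_def by blast
    then obtain y z where yz: "x + b' = y + z" "y \<in> A" "z \<in> B"
      using assms(6) unfolding minkowski_sum_def by blast
    have "u \<bullet> (x + b') = u \<bullet> y + u \<bullet> z" using yz by (simp add: inner_add_right)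
    moreover have "u \<bullet> y > u \<bullet> x" using u yz by force
    moreover have "u \<bullet> z \<ge> u \<bullet> b'" using b' yz assms(5) by blast
    ultimately show False by (simp add: inner_add_right)
  qed
qed

lemma constraints_Inter:
  fixes c :: "'a \<Rightarrow> real^'n \<Rightarrow> 'b \<Rightarrow> real"
  shows "{x::real^'n. \<forall>F n h. Phi F n h \<longrightarrow> n \<bullet> x \<ge> c F n h} =
     \<Inter> {{x. n \<bullet> x \<ge> c F n h} | F n h. Phi F n h}"
  by blast

lemma convex_constraints:
  fixes c :: "'a \<Rightarrow> real^'n \<Rightarrow> 'b \<Rightarrow> real"
  shows "convex {x::real^'n. \<forall>F n h. Phi F n h \<longrightarrow> n \<bullet> x \<ge> c F n h}"
  unfolding constraints_Inter by (rule convex_Inter) (auto intro: convex_halfspace_ge)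

lemma closed_constraints:
  fixes c :: "'a \<Rightarrow> real^'n \<Rightarrow> 'b \<Rightarrow> real"
  shows "closed {x::real^'n. \<forall>F n h. Phi F n h \<longrightarrow> n \<bullet> x \<ge> c F n h}"
  unfolding constraints_Inter by (rule closed_Inter) (auto intro: closed_halfspace_ge)

lemma convex_polar: "convex (polar_dual (Q :: (real^'n) set))"
proof -
  have "polar_dual Q = (\<Inter>x\<in>Q. {v. x \<bullet> v \<ge> -1})"
    by (auto simp: polar_dual_def inner_commute)
  then show ?thesis by (auto intro!: convex_INT convex_halfspace_ge)
qed

lemma facet_rep:
  fixes P :: "(real^'n) set"
  assumes S: "finite S" "\<forall>x\<in>S. lattice_point x" and P: "P = convex hull S"
    and int: "interior P \<noteq> {}"
  shows "P = {x. \<forall>F n h. facet_normal P F n h \<longrightarrow> n \<bullet> x \<ge> - of_int h}"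
proof
  show "P \<subseteq> {x. \<forall>F n h. facet_normal P F n h \<longrightarrow> n \<bullet> x \<ge> - of_int h}"
    unfolding facet_normal_def by blast
  show "{x. \<forall>F n h. facet_normal P F n h \<longrightarrow> n \<bullet> x \<ge> - of_int h} \<subseteq> P"
  proof
    fix x assume x: "x \<in> {x. \<forall>F n h. facet_normal P F n h \<longrightarrow> n \<bullet> x \<ge> - of_int h}"
    show "x \<in> P"
    proof (rule ccontr)
      assume xP: "x \<notin> P"
      have "polytope P" using S P polytope_def by blast
      then have "polyhedron P" by (rule polytope_imp_polyhedron)
      then obtain Fs where Fs: "finite Fs" "P = affine hull P \<inter> \<Inter>Fs"
        "\<forall>h\<in>Fs. \<exists>a b. a \<noteq> 0 \<and> h = {x. a \<bullet> x \<le> b}"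
        "\<forall>F'. F' \<subset> Fs \<longrightarrow> P \<subset> affine hull P \<inter> \<Inter>F'"
        unfolding polyhedron_Int_affine_minimal by blast
      then obtain a b where ab: "\<And>h. h \<in> Fs \<Longrightarrow> a h \<noteq> 0 \<and> h = {x. a h \<bullet> x \<le> b h}"
        by metis
      have aff: "affine hull P = UNIV" using affine_hull_nonempty_interior[OF int] .
      have PFs: "P = \<Inter>Fs" using Fs(2) unfolding aff by simp
      obtain hh where hh: "hh \<in> Fs" "x \<notin> hh" using xP PFs by blast
      have gt: "a hh \<bullet> x > b hh" using hh ab by force
      have Cf: "(P \<inter> {x. a hh \<bullet> x = b hh}) facet_of P"
        using facet_of_polyhedron_explicit[OF Fs(1) Fs(2) ab] Fs(4) hh(1) by blast
      have Psub: "P \<subseteq> {x. a hh \<bullet> x \<le> b hh}" using PFs hh(1) ab by blast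
      have "a hh \<noteq> 0" using ab hh(1) by blast
      then obtain n k c where nk: "c > 0" "n = (- c) *\<^sub>R a hh" "facet_normal P (P \<inter> {x. a hh \<bullet> x = b hh}) n k"
        using facet_int_normal[OF S P int Cf _ Psub refl] by blast
      have "P \<inter> {x. a hh \<bullet> x = b hh} \<noteq> {}" using Cf facet_of_def by blast
      then obtain y where y: "y \<in> P" "a hh \<bullet> y = b hh" by blast
      have "n \<bullet> y = - of_int k" using nk(3) y unfolding facet_normal_def by blast
      moreover have "n \<bullet> x < n \<bullet> y" using nk(1,2) gt y(2) by simp
      moreover have "n \<bullet> x \<ge> - of_int k" using x nk(3) by blast
      ultimately show False by simp
    qed
  qed
qed



lemma subsingleton_finite:
  assumes "\<forall>x\<in>A. \<forall>y\<in>A. x = y" shows "finite A"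
proof (cases "A = {}")
  case False
  then obtain x where "x \<in> A" by blast
  then have "A = {x}" using assms by blast
  then show ?thesis by simp
qed simp

theorem theorem3p12:
  fixes P :: "(real^'n) set"
  assumes "lattice_polytope P"
    and "interior P \<noteq> {}"
    and "P = minkowski_sum (lattice_floor (dilate (codegree P) P)) (remainder_polytope P)"
  shows "(lattice_floor (dilate (codegree P) P) =
           {x. \<forall>F n h. facet_normal P F n h \<longrightarrow>
                 n \<bullet> x \<ge> 1 - real (codegree P) * of_int h}) \<and>
         (remainder_polytope P =
           {x. \<forall>F n h. facet_normal P F n h \<longrightarrow>
                 n \<bullet> x \<ge> (real (codegree P) - 1) * of_int h - 1}) \<and>
         lattice_polytope {x. \<forall>F n h. facet_normal P F n h \<longrightarrow>
                 n \<bullet> x \<ge> 1 - real (codegree P) * of_int h} \<and>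
         lattice_polytope {x. \<forall>F n h. facet_normal P F n h \<longrightarrow>
                 n \<bullet> x \<ge> (real (codegree P) - 1) * of_int h - 1} \<and>
         (codegree P = 1 \<longrightarrow> reflexive_polytope (remainder_polytope P))"
proof -
  define a where "a = codegree P"
  define Q1 where "Q1 = {x. \<forall>F n h. facet_normal P F n h \<longrightarrow> n \<bullet> x \<ge> 1 - real a * of_int h}"
  define Q2 where "Q2 = {x. \<forall>F n h. facet_normal P F n h \<longrightarrow> n \<bullet> x \<ge> (real a - 1) * of_int h - 1}"
  define G1 where "G1 = {x. x \<in> interior (dilate a P) \<and> lattice_point x}"
  define G2 where "G2 = {x. lattice_point x \<and> x \<in> Q2}"
  define Fl where "Fl = lattice_floor (dilate a P)"
  define R where "R = remainder_polytope P"
  have Fl_def': "Fl = convex hull G1" unfolding Fl_def G1_def lattice_floor_def ..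
  have R_def': "R = convex hull G2" unfolding R_def G2_def Q2_def remainder_polytope_def a_def by simp
  obtain S where S: "finite S" "S \<noteq> {}" "\<forall>x\<in>S. lattice_point x" "P = convex hull S"
    using assms(1) unfolding lattice_polytope_def by blast
  have int: "interior P \<noteq> {}" by fact
  have rep: "P = {x. \<forall>F n h. facet_normal P F n h \<longrightarrow> n \<bullet> x \<ge> - of_int h}"
    using facet_rep[OF S(1,3,4) int] .
  have repI: "{x. \<forall>F n h. facet_normal P F n h \<longrightarrow> n \<bullet> x \<ge> - of_int h} \<subseteq> P"
    using rep by (rule equalityD2)
  have PFR: "P = minkowski_sum Fl R" using assms(3) unfolding Fl_def R_def a_def .
  have Pne: "P \<noteq> {}" using int interior_subset by blast
  have bP: "bounded P" using S by (simp add: compact_imp_bounded finite_imp_compact_convex_hull)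
  have nz: "n \<noteq> 0" if "facet_normal P F n h" for F n h
    using that unfolding facet_normal_def primitive_vec_def by blast
  have cQ1: "convex Q1" unfolding Q1_def by (rule convex_constraints)
  have cQ2: "convex Q2" unfolding Q2_def by (rule convex_constraints)
  have clQ1: "closed Q1" unfolding Q1_def by (rule closed_constraints)
  have clQ2: "closed Q2" unfolding Q2_def by (rule closed_constraints)
  have G1Q1: "G1 \<subseteq> Q1"
  proof
    fix x assume "x \<in> G1"
    then have x: "x \<in> interior (dilate a P)" "lattice_point x" unfolding G1_def by auto
    show "x \<in> Q1" unfolding Q1_def
    proof (intro CollectI allI impI)
      fix F n h assume fn: "facet_normal P F n h"
      have "\<forall>y\<in>dilate a P. n \<bullet> y \<ge> - (real a * of_int h)"
      proof
        fix y assume "y \<in> dilate a P"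
        then obtain z where z: "z \<in> P" "y = real a *\<^sub>R z" unfolding dilate_def by blast
        have "n \<bullet> z \<ge> - of_int h" using fn z unfolding facet_normal_def by blast
        then have "real a * (n \<bullet> z) \<ge> real a * (- of_int h)" by (intro mult_left_mono) auto
        then show "n \<bullet> y \<ge> - (real a * of_int h)" using z by simp
      qed
      then have gt: "n \<bullet> x > - (real a * of_int h)" using interior_strict[OF x(1) _ nz[OF fn]] by blast
      have "n \<bullet> x \<in> \<int>" using fn x(2) lattice_inner_Ints primitive_lattice unfolding facet_normal_def by blast
      then obtain k :: int where k: "n \<bullet> x = of_int k" by (metis Ints_cases)
      have "of_int k > (of_int (- (int a * h)) :: real)" using gt k by simp
      then have "k \<ge> 1 - int a * h" by linarith
      then have "(of_int k :: real) \<ge> of_int (1 - int a * h)" by linarith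
      then show "n \<bullet> x \<ge> 1 - real a * of_int h" using k by simp
    qed
  qed
  have FlQ1: "Fl \<subseteq> Q1" unfolding Fl_def' using G1Q1 cQ1 by (simp add: hull_minimal)
  have RQ2: "R \<subseteq> Q2" unfolding R_def' G2_def using cQ2 by (intro hull_minimal) auto
  have Flne: "Fl \<noteq> {}" and Rne: "R \<noteq> {}"
  proof -
    obtain p where "p \<in> P" using Pne by blast
    then have "p \<in> minkowski_sum Fl R" using PFR by simp
    then obtain x y where "x \<in> Fl" "y \<in> R" unfolding minkowski_sum_def by blast
    then show "Fl \<noteq> {}" "R \<noteq> {}" by blast+
  qed
  have sumsub: "minkowski_sum Q1 Q2 \<subseteq> P"
  proof
    fix z assume "z \<in> minkowski_sum Q1 Q2"
    then obtain x y where xy: "z = x + y" "x \<in> Q1" "y \<in> Q2" unfolding minkowski_sum_def by blast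
    have "\<forall>F n h. facet_normal P F n h \<longrightarrow> n \<bullet> z \<ge> - of_int h"
    proof (intro allI impI)
      fix F n h assume fn: "facet_normal P F n h"
      have "n \<bullet> x \<ge> 1 - real a * of_int h" using xy fn unfolding Q1_def by blast
      moreover have "n \<bullet> y \<ge> (real a - 1) * of_int h - 1" using xy fn unfolding Q2_def by blast
      ultimately show "n \<bullet> z \<ge> - of_int h" using xy by (simp add: inner_add_right algebra_simps)
    qed
    then show "z \<in> P" using repI by blast
  qed
  obtain x1 where x1: "x1 \<in> Q1" using Flne FlQ1 by blast
  obtain y1 where y1: "y1 \<in> Q2" using Rne RQ2 by blast
  have "Q2 \<subseteq> (\<lambda>z. (- x1) + z) ` P"
  proof
    fix y assume "y \<in> Q2"
    then have "x1 + y \<in> P" using sumsub x1 unfolding minkowski_sum_def by blast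
    then show "y \<in> (\<lambda>z. (- x1) + z) ` P" by (intro image_eqI[of _ _ "x1 + y"]) auto
  qed
  then have bQ2: "bounded Q2" by (rule bounded_subset[OF bounded_translation[OF bP]])
  have "Q1 \<subseteq> (\<lambda>z. (- y1) + z) ` P"
  proof
    fix x assume "x \<in> Q1"
    then have "x + y1 \<in> P" using sumsub y1 unfolding minkowski_sum_def by blast
    then show "x \<in> (\<lambda>z. (- y1) + z) ` P" by (intro image_eqI[of _ _ "x + y1"]) auto
  qed
  then have bQ1: "bounded Q1" by (rule bounded_subset[OF bounded_translation[OF bP]])
  have "bounded (dilate a P)" unfolding dilate_def using bP by (rule bounded_scaling)
  moreover have "G1 \<subseteq> dilate a P" unfolding G1_def using interior_subset by blast
  ultimately have "bounded G1" by (rule bounded_subset)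
  then have fG1: "finite G1" using bounded_lattice_finite unfolding G1_def by blast
  have "G2 \<subseteq> Q2" unfolding G2_def by blast
  then have "bounded G2" by (rule bounded_subset[OF bQ2])
  then have fG2: "finite G2" using bounded_lattice_finite unfolding G2_def by blast
  have cFl: "convex Fl" "closed Fl" unfolding Fl_def'
    using fG1 by (auto simp: finite_imp_compact_convex_hull compact_imp_closed)
  have cR: "convex R" "closed R" unfolding R_def'
    using fG2 by (auto simp: finite_imp_compact_convex_hull compact_imp_closed)
  have s1: "minkowski_sum Q1 Q2 \<subseteq> minkowski_sum Fl R" using sumsub PFR by simp
  have "Q1 \<subseteq> Fl"
    using cancel_sum[OF cFl compact_eq_bounded_closed[THEN iffD2, OF conjI[OF bQ2 clQ2]] _ RQ2 s1] y1 by blast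
  then have eq1: "Fl = Q1" using FlQ1 by blast
  have s2: "minkowski_sum Q2 Q1 \<subseteq> minkowski_sum R Fl"
    using s1 by (simp only: msum_commute[of Q2 Q1] msum_commute[of R Fl])
  have "Q2 \<subseteq> R"
    using cancel_sum[OF cR compact_eq_bounded_closed[THEN iffD2, OF conjI[OF bQ1 clQ1]] _ FlQ1 s2] x1 by blast
  then have eq2: "R = Q2" using RQ2 by blast
  have lp1: "lattice_polytope Q1"
  proof -
    have "G1 \<noteq> {}" using Flne unfolding Fl_def' by simp
    moreover have "\<forall>x\<in>G1. lattice_point x" unfolding G1_def by blast
    moreover have "Q1 = convex hull G1" using eq1 Fl_def' by simp
    ultimately show ?thesis unfolding lattice_polytope_def using fG1 by blast
  qed
  have lp2: "lattice_polytope Q2"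
  proof -
    have "G2 \<noteq> {}" using Rne unfolding R_def' by simp
    moreover have "\<forall>x\<in>G2. lattice_point x" unfolding G2_def by blast
    moreover have "Q2 = convex hull G2" using eq2 R_def' by simp
    ultimately show ?thesis unfolding lattice_polytope_def using fG2 by blast
  qed
  have refl: "reflexive_polytope R" if a1: "a = 1"
  proof -
    have Q2': "Q2 = {x. \<forall>F n h. facet_normal P F n h \<longrightarrow> n \<bullet> x \<ge> -1}"
      unfolding Q2_def a1 by simp
    define N where "N = {n. \<exists>F h. facet_normal P F n h}"
    have "N = (\<Union>F\<in>{F. F facet_of P}. {n. \<exists>h. facet_normal P F n h})"
      unfolding N_def facet_normal_def by blast
    moreover have "finite {F. F facet_of P}"
      using S polytope_def finite_polytope_facets by blast
    moreover have "finite {n. \<exists>h. facet_normal P F n h}" for F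
      using facet_normal_unique[OF S(1,3,4) int] by (intro subsingleton_finite) blast
    ultimately have fN: "finite N" by simp
    have latN: "\<forall>n\<in>N. lattice_point n"
      unfolding N_def facet_normal_def using primitive_lattice by blast
    have "polytope P" using S polytope_def by blast
    moreover have "0 < aff_dim P" using aff_dim_nonempty_interior[OF int] by simp
    ultimately obtain F where F: "F facet_of P" using polytope_facet_exists by blast
    obtain a0 b0 where ab0: "a0 \<noteq> 0" "P \<subseteq> {x. a0 \<bullet> x \<le> b0}" "F = P \<inter> {x. a0 \<bullet> x = b0}"
      using facet_of_polyhedron[OF polytope_imp_polyhedron[OF \<open>polytope P\<close>] F] by blast
    obtain n0 h0 c0 where "facet_normal P F n0 h0"
      using facet_int_normal[OF S(1,3,4) int F ab0] by blast
    then have n0N: "n0 \<in> N" unfolding N_def by blast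
    then have Nne: "N \<noteq> {}" by blast
    have polar: "polar_dual Q2 = convex hull N"
    proof
      have "N \<subseteq> polar_dual Q2" unfolding N_def polar_dual_def Q2' by auto
      then show "convex hull N \<subseteq> polar_dual Q2" using convex_polar by (rule hull_minimal)
      show "polar_dual Q2 \<subseteq> convex hull N"
      proof
        fix v assume v: "v \<in> polar_dual Q2"
        show "v \<in> convex hull N"
        proof (rule ccontr)
          assume vN: "v \<notin> convex hull N"
          have "compact (convex hull N)" using fN by (simp add: finite_imp_compact_convex_hull)
          then obtain y \<beta> where y: "y \<bullet> v < \<beta>" "\<forall>z\<in>convex hull N. \<beta> < y \<bullet> z"
            using separating_hyperplane_closed_point[OF convex_convex_hull compact_imp_closed vN] by blast
          have yN: "\<beta> < y \<bullet> n" if "n \<in> N" for n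
          proof -
            have "n \<in> convex hull N" using that by (rule hull_inc)
            then show ?thesis using y(2) by blast
          qed
          show False
          proof (cases "\<beta> < 0")
            case True
            define x where "x = (1 / (- \<beta>)) *\<^sub>R y"
            have "x \<in> Q2" unfolding Q2'
            proof (intro CollectI allI impI)
              fix F n h assume "facet_normal P F n h"
              then have "n \<in> N" unfolding N_def by blast
              then have "\<beta> < y \<bullet> n" by (rule yN)
              then have "\<beta> / (- \<beta>) < (y \<bullet> n) / (- \<beta>)" using True by (simp add: divide_strict_right_mono)
              then show "n \<bullet> x \<ge> -1" using True by (simp add: x_def inner_commute)
            qed
            moreover have "v \<bullet> x < -1"
            proof -
              have "(y \<bullet> v) / (- \<beta>) < \<beta> / (- \<beta>)" using y(1) True by (simp add: divide_strict_right_mono)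
              then show ?thesis using True by (simp add: x_def inner_commute)
            qed
            ultimately show False using v unfolding polar_dual_def by force
          next
            case False
            have "y \<noteq> 0" using yN[OF n0N] False by auto
            obtain B where B: "\<forall>x\<in>Q2. norm x \<le> B" using bQ2 bounded_iff by blast
            define t where "t = (\<bar>B\<bar> + 1) / norm y"
            have t0: "t \<ge> 0" unfolding t_def by simp
            have "t *\<^sub>R y \<in> Q2" unfolding Q2'
            proof (intro CollectI allI impI)
              fix F n h assume "facet_normal P F n h"
              then have "n \<in> N" unfolding N_def by blast
              then have "0 \<le> y \<bullet> n" using yN False by force
              then have "0 \<le> t * (y \<bullet> n)" using t0 by simp
              then show "n \<bullet> (t *\<^sub>R y) \<ge> -1" by (simp add: inner_commute)
            qed
            moreover have "norm (t *\<^sub>R y) = \<bar>B\<bar> + 1" using \<open>y \<noteq> 0\<close> t0 by (simp add: t_def)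
            ultimately show False using B by force
          qed
        qed
      qed
    qed
    have "lattice_polytope (polar_dual R)"
      unfolding eq2 polar lattice_polytope_def using fN Nne latN by blast
    then show ?thesis unfolding reflexive_polytope_def using lp2 eq2 by simp
  qed
  show ?thesis
    using eq1 eq2 lp1 lp2 refl unfolding Fl_def R_def Q1_def Q2_def a_def by blast
qed



end
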